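(* Let $m\ge 2$ and $n\ge 1$. In any $m\times n$ maximal configuration resistant to predators, the number of occupied lots in row $m-1$ (the penultimate row) is at most $2\lceil n/3\rceil$.
   Context: An $m\times n$ configuration is a $0$-$1$ matrix $C=(C_{i,j})$, $1\le i\le m$, $1\le j\le n$; $C_{i,j}=1$ means lot $(i,j)$ is occupied by a house. Row $1$ is the northernmost and row $m$ the southernmost; column $1$ is westernmost and column $n$ easternmost. A house at $(i,j)$ is blocked from sunlight if the three lots $(i,j-1)$, $(i,j+1)$, $(i+1,j)$ all lie inside the grid and are all occupied (lots outside the grid never obstruct sunlight). $C$ is permissible if no house is blocked, and maximal if it is permissible and setting any single empty lot to $1$ yields a non-permissible configuration. A maximal configuration is resistant to predators if, for every empty lot, putting a house on it (alone) results in that new house being blocked. *)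

theory Defs
  imports Complex_Main
begin

text \<open>An m x n configuration is modelled as a predicate C :: nat => nat => bool;
  C i j means lot (i,j) is occupied. Only lots with 1 <= i <= m, 1 <= j <= n matter.\<close>

type_synonym config = "nat \<Rightarrow> nat \<Rightarrow> bool"

definition in_grid :: "nat \<Rightarrow> nat \<Rightarrow> nat \<Rightarrow> nat \<Rightarrow> bool" where
  "in_grid m n i j \<longleftrightarrow> 1 \<le> i \<and> i \<le> m \<and> 1 \<le> j \<and> j \<le> n"

definition blocked :: "nat \<Rightarrow> nat \<Rightarrow> config \<Rightarrow> nat \<Rightarrow> nat \<Rightarrow> bool" where
  "blocked m n C i j \<longleftrightarrow>
     in_grid m n i (j - 1) \<and> 2 \<le> j \<and> in_grid m n i (j + 1) \<and> in_grid m n (i + 1) j \<and>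
     C i (j - 1) \<and> C i (j + 1) \<and> C (i + 1) j"

definition permissible :: "nat \<Rightarrow> nat \<Rightarrow> config \<Rightarrow> bool" where
  "permissible m n C \<longleftrightarrow> (\<forall>i j. in_grid m n i j \<and> C i j \<longrightarrow> \<not> blocked m n C i j)"

definition maximal :: "nat \<Rightarrow> nat \<Rightarrow> config \<Rightarrow> bool" where
  "maximal m n C \<longleftrightarrow> permissible m n C \<and>
     (\<forall>i j. in_grid m n i j \<and> \<not> C i j \<longrightarrow> \<not> permissible m n (C(i := (C i)(j := True))))"

definition resistant :: "nat \<Rightarrow> nat \<Rightarrow> config \<Rightarrow> bool" where
  "resistant m n C \<longleftrightarrow> maximal m n C \<and>
     (\<forall>i j. in_grid m n i j \<and> \<not> C i j \<longrightarrow> blocked m n (C(i := (C i)(j := True))) i j)"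

end

theory Submission
  imports Defs
begin

lemma three_card:
  assumes "\<not> (P (k+1) \<and> P (k+2) \<and> P (k+3))"
  shows "card {j \<in> {k+1..k+3}. P (j::nat)} \<le> 2"
proof -
  have e: "{k+1..k+3} = {k+1,k+2,k+3::nat}" by auto
  have "{j \<in> {k+1..k+3}. P j} \<subseteq> {k+2,k+3} \<or> {j \<in> {k+1..k+3}. P j} \<subseteq> {k+1,k+3}
     \<or> {j \<in> {k+1..k+3}. P j} \<subseteq> {k+1,k+2}"
    using assms unfolding e by blast
  moreover have "\<And>a b. card {a::nat, b} \<le> 2" by (simp add: card_insert_le_m1)
  ultimately show ?thesis by (meson card_mono dual_order.trans finite.emptyI finite.insertI)
qed

lemma combin:
  assumes "\<forall>j. 1 \<le> j \<and> j + 2 \<le> N \<longrightarrow> \<not> (P j \<and> P (j+1) \<and> P (j+2))"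
  shows "n \<le> N \<Longrightarrow> card {j \<in> {1..n}. P j} \<le> 2 * ((n + 2) div 3)"
proof (induction n rule: less_induct)
  case (less n)
  show ?case
  proof (cases "n < 3")
    case True
    have "card {j \<in> {1..n}. P j} \<le> card {1..n}" by (rule card_mono) auto
    then show ?thesis using True by simp
  next
    case False
    then obtain k where k: "n = k + 3" by (metis add.commute le_Suc_ex not_less)
    have IH: "card {j \<in> {1..k}. P j} \<le> 2 * ((k + 2) div 3)" using less k by simp
    have "{j \<in> {1..n}. P j} = {j \<in> {1..k}. P j} \<union> {j \<in> {k+1..k+3}. P j}" using k by auto
    hence "card {j \<in> {1..n}. P j} \<le> card {j \<in> {1..k}. P j} + card {j \<in> {k+1..k+3}. P j}"
      by (simp add: card_Un_le)
    moreover have "card {j \<in> {k+1..k+3}. P j} \<le> 2"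
      apply (rule three_card)
      using assms[rule_format, of "k+1"] less.prems k by (simp add: numeral_3_eq_3)
    moreover have "(n + 2) div 3 = (k + 2) div 3 + 1" using k by simp
    ultimately show ?thesis using IH by linarith
  qed
qed

theorem mainTheorem7:
  fixes m n :: nat and C :: config
  assumes "m \<ge> 2" and "n \<ge> 1"
    and "resistant m n C"
  shows "real (card {j \<in> {1..n}. C (m - 1) j}) \<le> 2 * of_int \<lceil>real n / 3\<rceil>"
proof -
  have lastrow: "C m j" if "1 \<le> j" "j \<le> n" for j
  proof (rule ccontr)
    assume "\<not> C m j"
    hence "blocked m n (C(m := (C m)(j := True))) m j"
      using assms(3) that assms(1) unfolding resistant_def in_grid_def by auto
    thus False unfolding blocked_def in_grid_def by simp
  qed
  have perm: "permissible m n C" using assms(3) unfolding resistant_def maximal_def by simp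
  have nt: "\<forall>j. 1 \<le> j \<and> j + 2 \<le> n \<longrightarrow> \<not> (C (m-1) j \<and> C (m-1) (j+1) \<and> C (m-1) (j+2))"
  proof (intro allI impI notI)
    fix j assume j: "1 \<le> j \<and> j + 2 \<le> n" and c: "C (m-1) j \<and> C (m-1) (j+1) \<and> C (m-1) (j+2)"
    have "blocked m n C (m-1) (j+1)"
      unfolding blocked_def in_grid_def using j c assms(1) lastrow[of "j+1"]
      by (auto simp: add.assoc)
    moreover have "in_grid m n (m-1) (j+1)" unfolding in_grid_def using j assms(1) by auto
    ultimately show False using perm c unfolding permissible_def by blast
  qed
  have c: "card {j \<in> {1..n}. C (m - 1) j} \<le> 2 * ((n + 2) div 3)"
    using combin[OF nt] by simp
  have "int ((n + 2) div 3) \<le> \<lceil>real n / 3\<rceil>"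
  proof -
    have "3 * ((n + 2) div 3) \<le> n + 2" by simp
    hence "real ((n + 2) div 3) - 1 < real n / 3" by linarith
    thus ?thesis by (simp add: le_ceiling_iff)
  qed
  thus ?thesis using c by linarith
qed

end
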